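(* Let $(X,d_X)$ and $(Y,d_Y)$ be ultrametric spaces and let $d$ be a partial distance-preserving metric on $X\times Y$ with $d_\infty\le d$. Suppose that $d((x_1,y_1),(x_2,y_2))=d((x_2,y_1),(x_1,y_2))$ for all $x_1,x_2\in X$ and $y_1,y_2\in Y$. Then $(X\times Y,d)$ is ultrametric if and only if $\mathcal N_\varepsilon(W\times Z)=\mathcal N_\varepsilon(W)\cdot\mathcal N_\varepsilon(Z)$ for all compact sets $W\subseteq X$, $Z\subseteq Y$ and every $\varepsilon>0$ (quantities computed in $(X,d_X)$, $(Y,d_Y)$, $(X\times Y,d)$ respectively).
   Context: $d_\infty((x_1,y_1),(x_2,y_2))=\max\{d_X(x_1,x_2),d_Y(y_1,y_2)\}$. A metric $d$ on $X\times Y$ is partial distance-preserving if $d((x_1,y),(x_2,y))=d_X(x_1,x_2)$ and $d((x,y_1),(x,y_2))=d_Y(y_1,y_2)$ for all $x,x_1,x_2\in X$, $y,y_1,y_2\in Y$. Ultrametric: $\rho(a,b)\le\max\{\rho(a,c),\rho(c,b)\}$. In a metric space $(M,\rho)$ with closed balls $B(c,r)=\{x:\rho(x,c)\le r\}$, $C$ is an $\varepsilon$-net for $V$ if $V\subseteq\bigcup_{c\in C}B(c,\varepsilon)$, and for totally bounded $V$ the covering number $\mathcal N_\varepsilon(V)$ is the smallest cardinality of a subset of $V$ that is an $\varepsilon$-net for $V$. *)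

theory Defs
  imports "HOL-Analysis.Analysis"
begin

text \<open>A metric space is represented as a carrier set M with a distance d
  satisfying the library locale Metric_space M d.\<close>

definition ultrametric :: "'a set \<Rightarrow> ('a \<Rightarrow> 'a \<Rightarrow> real) \<Rightarrow> bool" where
  "ultrametric M d \<longleftrightarrow> (\<forall>a\<in>M. \<forall>b\<in>M. \<forall>c\<in>M. d a b \<le> max (d a c) (d c b))"

definition is_net :: "'a set \<Rightarrow> ('a \<Rightarrow> 'a \<Rightarrow> real) \<Rightarrow> real \<Rightarrow> 'a set \<Rightarrow> 'a set \<Rightarrow> bool" where
  "is_net M d eps V C \<longleftrightarrow> V \<subseteq> (\<Union>c\<in>C. {x\<in>M. d x c \<le> eps})"

definition covering_number :: "'a set \<Rightarrow> ('a \<Rightarrow> 'a \<Rightarrow> real) \<Rightarrow> real \<Rightarrow> 'a set \<Rightarrow> nat" where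
  "covering_number M d eps V =
     (LEAST n. \<exists>C. finite C \<and> card C = n \<and> C \<subseteq> V \<and> is_net M d eps V C)"

definition partial_distance_preserving ::
  "'a set \<Rightarrow> ('a \<Rightarrow> 'a \<Rightarrow> real) \<Rightarrow> 'b set \<Rightarrow> ('b \<Rightarrow> 'b \<Rightarrow> real) \<Rightarrow> ('a \<times> 'b \<Rightarrow> 'a \<times> 'b \<Rightarrow> real) \<Rightarrow> bool" where
  "partial_distance_preserving X dX Y dY d \<longleftrightarrow>
     (\<forall>x1\<in>X. \<forall>x2\<in>X. \<forall>y\<in>Y. d (x1, y) (x2, y) = dX x1 x2) \<and>
     (\<forall>x\<in>X. \<forall>y1\<in>Y. \<forall>y2\<in>Y. d (x, y1) (x, y2) = dY y1 y2)"

end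

theory Submission
  imports Defs
begin

definition cls :: "('a \<Rightarrow> 'a \<Rightarrow> real) \<Rightarrow> real \<Rightarrow> 'a set \<Rightarrow> 'a \<Rightarrow> 'a set" where
  "cls d eps W x = {y\<in>W. d x y \<le> eps}"

lemma cls_eq:
  assumes ms: "Metric_space M d" and u: "ultrametric M d" and "W \<subseteq> M"
    and "a \<in> M" "b \<in> M" "d a b \<le> eps"
  shows "cls d eps W a = cls d eps W b"
proof -
  have "d b y \<le> eps" if "y \<in> W" "d a y \<le> eps" for y
  proof -
    have "d b y \<le> max (d b a) (d a y)" using u assms that unfolding ultrametric_def by blast
    moreover have "d b a = d a b" using Metric_space.commute[OF ms] assms by metis
    ultimately show ?thesis using assms that by linarith
  qed
  moreover have "d a y \<le> eps" if "y \<in> W" "d b y \<le> eps" for y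
  proof -
    have "d a y \<le> max (d a b) (d b y)" using u assms that unfolding ultrametric_def by blast
    then show ?thesis using assms that by linarith
  qed
  ultimately show ?thesis unfolding cls_def by blast
qed

lemma cov_N:
  assumes ms: "Metric_space M d" and u: "ultrametric M d" and WM: "W \<subseteq> M"
    and fin: "finite (cls d eps W ` W)" and e: "eps \<ge> 0"
  shows "covering_number M d eps W = card (cls d eps W ` W)"
proof -
  let ?P = "cls d eps W ` W"
  let ?Q = "\<lambda>n. \<exists>C. finite C \<and> card C = n \<and> C \<subseteq> W \<and> is_net M d eps W C"
  define f where "f A = (SOME x. x \<in> A)" for A :: "'a set"
  have fA: "f A \<in> A" if AP: "A \<in> ?P" for A
  proof -
    obtain w where w: "w \<in> W" "A = cls d eps W w" using AP by blast
    have "w \<in> A" using w WM e Metric_space.mdist_zero[OF ms] unfolding cls_def by auto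
    then show ?thesis unfolding f_def by (metis someI)
  qed
  define C where "C = f ` ?P"
  have QC: "?Q (card C)"
  proof (intro exI conjI)
    show "finite C" using fin C_def by simp
    show "C \<subseteq> W" using fA unfolding C_def cls_def by blast
    show "is_net M d eps W C" unfolding is_net_def
    proof
      fix w assume w: "w \<in> W"
      have "f (cls d eps W w) \<in> cls d eps W w" using fA w by blast
      then show "w \<in> (\<Union>c\<in>C. {x \<in> M. d x c \<le> eps})"
        using w WM unfolding C_def cls_def by blast
    qed
  qed simp
  have "card C \<le> card ?P" unfolding C_def by (rule card_image_le[OF fin])
  then have le: "covering_number M d eps W \<le> card ?P"
    unfolding covering_number_def using Least_le[of ?Q, OF QC] by linarith
  have ge: "card ?P \<le> n" if Qn: "?Q n" for n
  proof -
    obtain D where D: "finite D" "card D = n" "D \<subseteq> W" "is_net M d eps W D" using Qn by blast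
    have "?P \<subseteq> cls d eps W ` D"
    proof
      fix A assume "A \<in> ?P"
      then obtain w where w: "w \<in> W" "A = cls d eps W w" by blast
      then obtain c where c: "c \<in> D" "d w c \<le> eps" using D(4) unfolding is_net_def by blast
      have "cls d eps W w = cls d eps W c"
        using cls_eq[OF ms u WM] c w WM D(3) by blast
      then show "A \<in> cls d eps W ` D" using c w by blast
    qed
    then have "card ?P \<le> card (cls d eps W ` D)" using D(1) by (simp add: card_mono)
    also have "\<dots> \<le> card D" using D(1) by (rule card_image_le)
    finally show ?thesis using D(2) by simp
  qed
  have "?Q (covering_number M d eps W)" unfolding covering_number_def
    using LeastI[of ?Q, OF QC] .
  then have "card ?P \<le> covering_number M d eps W" by (rule ge)
  with le show ?thesis by simp
qed

lemma cls_fin: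
  assumes ms: "Metric_space M d" and u: "ultrametric M d"
    and c: "compactin (Metric_space.mtopology M d) W" and e: "eps > 0"
  shows "finite (cls d eps W ` W)"
proof -
  have WM: "W \<subseteq> M" using compactin_subset_topspace[OF c] Metric_space.topspace_mtopology[OF ms] by simp
  have "Metric_space.mtotally_bounded M d W"
    using Metric_space.compactin_imp_mtotally_bounded[OF ms c] .
  then obtain K where K: "finite K" "K \<subseteq> W" "W \<subseteq> (\<Union>x\<in>K. Metric_space.mball M d x eps)"
    using e unfolding Metric_space.mtotally_bounded_def[OF ms] by meson
  have "cls d eps W ` W \<subseteq> cls d eps W ` K"
  proof
    fix A assume "A \<in> cls d eps W ` W"
    then obtain w where w: "w \<in> W" "A = cls d eps W w" by blast
    from w(1) K(3) obtain k where k: "k \<in> K" "w \<in> Metric_space.mball M d k eps" by blast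
    then have "d k w < eps" using Metric_space.in_mball[OF ms] by blast
    moreover have "k \<in> M" "w \<in> M" using k(1) K(2) w(1) WM by auto
    ultimately have "cls d eps W k = cls d eps W w"
      using cls_eq[OF ms u WM, of k w eps] by simp
    then show "A \<in> cls d eps W ` K" using k w by blast
  qed
  moreover have "finite (cls d eps W ` K)" using K(1) by simp
  ultimately show ?thesis by (rule finite_subset)
qed

lemma cov_one:
  assumes "a \<in> W" "W \<subseteq> M" "\<forall>w\<in>W. d w a \<le> eps"
  shows "covering_number M d eps W = 1"
  unfolding covering_number_def
proof (rule Least_equality)
  show "\<exists>C. finite C \<and> card C = 1 \<and> C \<subseteq> W \<and> is_net M d eps W C"
    using assms by (intro exI[of _ "{a}"]) (auto simp: is_net_def)
  fix n assume "\<exists>C. finite C \<and> card C = n \<and> C \<subseteq> W \<and> is_net M d eps W C"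
  then obtain C where "finite C" "card C = n" "C \<subseteq> W" "is_net M d eps W C" by blast
  then show "1 \<le> n" using assms unfolding is_net_def by (cases "n = 0") auto
qed

lemma cov_ne1:
  assumes ms: "Metric_space M d" and "finite W" "W \<subseteq> M" "eps \<ge> 0"
    and far: "\<forall>c\<in>W. \<exists>w\<in>W. d w c > eps"
  shows "covering_number M d eps W \<noteq> 1"
proof
  let ?Q = "\<lambda>n. \<exists>C. finite C \<and> card C = n \<and> C \<subseteq> W \<and> is_net M d eps W C"
  have "is_net M d eps W W" unfolding is_net_def
  proof
    fix x assume "x \<in> W"
    then have "x \<in> M" "d x x \<le> eps" using assms Metric_space.mdist_zero[OF ms] by auto
    then show "x \<in> (\<Union>c\<in>W. {x \<in> M. d x c \<le> eps})" using \<open>x \<in> W\<close> by blast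
  qed
  then have "?Q (card W)" using assms by blast
  then have "?Q (covering_number M d eps W)" unfolding covering_number_def by (rule LeastI)
  moreover assume "covering_number M d eps W = 1"
  ultimately obtain C where "card C = 1" "C \<subseteq> W" "is_net M d eps W C" by auto
  then obtain c where "C = {c}" "c \<in> W" "\<forall>w\<in>W. d w c \<le> eps"
    unfolding is_net_def by (auto simp: card_Suc_eq)
  then show False using far by force
qed

theorem corollary4p8:
  fixes X :: "'a set" and dX :: "'a \<Rightarrow> 'a \<Rightarrow> real"
    and Y :: "'b set" and dY :: "'b \<Rightarrow> 'b \<Rightarrow> real"
    and d :: "'a \<times> 'b \<Rightarrow> 'a \<times> 'b \<Rightarrow> real"
  assumes "Metric_space X dX" and "ultrametric X dX"
    and "Metric_space Y dY" and "ultrametric Y dY"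
    and "Metric_space (X \<times> Y) d"
    and "partial_distance_preserving X dX Y dY d"
    and "\<forall>x1\<in>X. \<forall>x2\<in>X. \<forall>y1\<in>Y. \<forall>y2\<in>Y.
           max (dX x1 x2) (dY y1 y2) \<le> d (x1, y1) (x2, y2)"
    and "\<forall>x1\<in>X. \<forall>x2\<in>X. \<forall>y1\<in>Y. \<forall>y2\<in>Y.
           d (x1, y1) (x2, y2) = d (x2, y1) (x1, y2)"
  shows "ultrametric (X \<times> Y) d \<longleftrightarrow>
    (\<forall>W Z eps. compactin (Metric_space.mtopology X dX) W \<and>
               compactin (Metric_space.mtopology Y dY) Z \<and> eps > 0 \<longrightarrow>
       covering_number (X \<times> Y) d eps (W \<times> Z) =
         covering_number X dX eps W * covering_number Y dY eps Z)"
proof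
  assume u: "ultrametric (X \<times> Y) d"
  have dinf: "d (x1, y1) (x2, y2) = max (dX x1 x2) (dY y1 y2)"
    if "x1 \<in> X" "x2 \<in> X" "y1 \<in> Y" "y2 \<in> Y" for x1 x2 y1 y2
  proof -
    have "d (x1, y1) (x2, y2) \<le> max (d (x1, y1) (x2, y1)) (d (x2, y1) (x2, y2))"
      using u that unfolding ultrametric_def by blast
    also have "\<dots> = max (dX x1 x2) (dY y1 y2)"
      using assms(6) that unfolding partial_distance_preserving_def by simp
    moreover have "max (dX x1 x2) (dY y1 y2) \<le> d (x1, y1) (x2, y2)" using assms(7) that by blast
    ultimately show ?thesis by linarith
  qed
  show "\<forall>W Z eps. compactin (Metric_space.mtopology X dX) W \<and>
               compactin (Metric_space.mtopology Y dY) Z \<and> eps > 0 \<longrightarrow>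
       covering_number (X \<times> Y) d eps (W \<times> Z) =
         covering_number X dX eps W * covering_number Y dY eps Z"
  proof (intro allI impI, elim conjE)
    fix W Z eps
    assume cW: "compactin (Metric_space.mtopology X dX) W"
      and cZ: "compactin (Metric_space.mtopology Y dY) Z" and e: "(eps::real) > 0"
    have WX: "W \<subseteq> X" using compactin_subset_topspace[OF cW] Metric_space.topspace_mtopology[OF assms(1)] by simp
    have ZY: "Z \<subseteq> Y" using compactin_subset_topspace[OF cZ] Metric_space.topspace_mtopology[OF assms(3)] by simp
    let ?PW = "cls dX eps W ` W" and ?PZ = "cls dY eps Z ` Z"
    have fW: "finite ?PW" using cls_fin[OF assms(1,2) cW e] .
    have fZ: "finite ?PZ" using cls_fin[OF assms(3,4) cZ e] .
    have prod: "cls d eps (W \<times> Z) (w, z) = cls dX eps W w \<times> cls dY eps Z z"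
      if wz: "w \<in> W" "z \<in> Z" for w z
    proof -
      have *: "(a,b) \<in> cls d eps (W \<times> Z) (w, z) \<longleftrightarrow> (a,b) \<in> cls dX eps W w \<times> cls dY eps Z z" for a b
      proof (cases "a \<in> W \<and> b \<in> Z")
        case True
        then have "d (w, z) (a, b) = max (dX w a) (dY z b)" using dinf wz WX ZY by blast
        then show ?thesis using True by (simp add: cls_def)
      next
        case False then show ?thesis by (auto simp: cls_def)
      qed
      show ?thesis
      proof (rule set_eqI)
        fix p show "p \<in> cls d eps (W \<times> Z) (w, z) \<longleftrightarrow> p \<in> cls dX eps W w \<times> cls dY eps Z z"
          using *[of "fst p" "snd p"] by simp
      qed
    qed
    have "cls d eps (W \<times> Z) ` (W \<times> Z) = (\<lambda>(w,z). cls dX eps W w \<times> cls dY eps Z z) ` (W \<times> Z)"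
      by (rule image_cong) (auto simp: prod)
    also have "\<dots> = (\<lambda>(A, B). A \<times> B) ` (map_prod (cls dX eps W) (cls dY eps Z) ` (W \<times> Z))"
      by (simp add: image_image split_def)
    also have "\<dots> = (\<lambda>(A, B). A \<times> B) ` (?PW \<times> ?PZ)"
      by (simp add: map_prod_surj_on)
    finally have P: "cls d eps (W \<times> Z) ` (W \<times> Z) = (\<lambda>(A, B). A \<times> B) ` (?PW \<times> ?PZ)" .
    have ne: "A \<noteq> {}" if "A \<in> ?PW" for A
      using that WX e Metric_space.mdist_zero[OF assms(1)] unfolding cls_def by fastforce
    have ne2: "B \<noteq> {}" if "B \<in> ?PZ" for B
      using that ZY e Metric_space.mdist_zero[OF assms(3)] unfolding cls_def by fastforce
    have key: "A = A' \<and> B = B'" if "A \<in> ?PW" "B \<in> ?PZ" "A' \<in> ?PW" "B' \<in> ?PZ"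
      "A \<times> B = A' \<times> B'" for A B A' B'
    proof -
      have "A \<noteq> {}" "B \<noteq> {}" using ne ne2 that(1,2) by auto
      then show ?thesis using that(5) by (simp add: times_eq_iff)
    qed
    have inj: "inj_on (\<lambda>(A, B). A \<times> B) (?PW \<times> ?PZ)"
    proof (rule inj_onI)
      fix p q assume pq: "p \<in> ?PW \<times> ?PZ" "q \<in> ?PW \<times> ?PZ"
        "(\<lambda>(A, B). A \<times> B) p = (\<lambda>(A, B). A \<times> B) q"
      have "fst p = fst q \<and> snd p = snd q"
        by (rule key) (use pq in \<open>auto simp: split_def mem_Times_iff\<close>)
      then show "p = q" by (simp add: prod_eq_iff)
    qed
    have "covering_number (X \<times> Y) d eps (W \<times> Z) = card (cls d eps (W \<times> Z) ` (W \<times> Z))"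
    proof (rule cov_N[OF assms(5) u])
      show "W \<times> Z \<subseteq> X \<times> Y" using WX ZY by auto
      show "finite (cls d eps (W \<times> Z) ` (W \<times> Z))" unfolding P using fW fZ by simp
    qed (use e in simp)
    also have "\<dots> = card ?PW * card ?PZ"
      unfolding P card_image[OF inj] card_cartesian_product ..
    also have "\<dots> = covering_number X dX eps W * covering_number Y dY eps Z"
      using cov_N[OF assms(1,2) WX fW] cov_N[OF assms(3,4) ZY fZ] e by simp
    finally show "covering_number (X \<times> Y) d eps (W \<times> Z) =
         covering_number X dX eps W * covering_number Y dY eps Z" .
  qed
next
  assume H: "\<forall>W Z eps. compactin (Metric_space.mtopology X dX) W \<and>
               compactin (Metric_space.mtopology Y dY) Z \<and> eps > 0 \<longrightarrow>
       covering_number (X \<times> Y) d eps (W \<times> Z) =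
         covering_number X dX eps W * covering_number Y dY eps Z"
  have dinf: "d (x1, y1) (x2, y2) = max (dX x1 x2) (dY y1 y2)"
    if x: "x1 \<in> X" "x2 \<in> X" "y1 \<in> Y" "y2 \<in> Y" for x1 x2 y1 y2
  proof (rule ccontr)
    assume "d (x1, y1) (x2, y2) \<noteq> max (dX x1 x2) (dY y1 y2)"
    with assms(7) x have gt: "d (x1, y1) (x2, y2) > max (dX x1 x2) (dY y1 y2)"
      by force
    define m where "m = max (dX x1 x2) (dY y1 y2)"
    have "x1 \<noteq> x2"
    proof
      assume "x1 = x2"
      then have "d (x1, y1) (x2, y2) = dY y1 y2"
        using assms(6) x unfolding partial_distance_preserving_def by simp
      then show False using gt by simp
    qed
    then have "dX x1 x2 > 0"
      using Metric_space.zero[OF assms(1) x(1,2)] Metric_space.nonneg[OF assms(1)] by (metis less_eq_real_def)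
    then have m: "m > 0" unfolding m_def by simp
    let ?W = "{x1, x2}" and ?Z = "{y1, y2}"
    have cW: "compactin (Metric_space.mtopology X dX) ?W"
      by (rule finite_imp_compactin) (use Metric_space.topspace_mtopology[OF assms(1)] x in auto)
    have cZ: "compactin (Metric_space.mtopology Y dY) ?Z"
      by (rule finite_imp_compactin) (use Metric_space.topspace_mtopology[OF assms(3)] x in auto)
    have c1: "covering_number X dX m ?W = 1"
      by (rule cov_one[of x1]) (use x Metric_space.mdist_zero[OF assms(1)] Metric_space.commute[OF assms(1)] m in \<open>auto simp: m_def\<close>)
    have c2: "covering_number Y dY m ?Z = 1"
      by (rule cov_one[of y1]) (use x Metric_space.mdist_zero[OF assms(3)] Metric_space.commute[OF assms(3)] m in \<open>auto simp: m_def\<close>)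
    have sw: "d (x2, y1) (x1, y2) = d (x1, y1) (x2, y2)" using assms(8) x by metis
    have com: "d p q = d q p" if "p \<in> X \<times> Y" "q \<in> X \<times> Y" for p q
      using Metric_space.commute[OF assms(5)] .
    have far: "\<forall>c\<in>?W \<times> ?Z. \<exists>w\<in>?W \<times> ?Z. d w c > m"
    proof
      fix c assume "c \<in> ?W \<times> ?Z"
      then consider "c = (x1, y1)" | "c = (x2, y2)" | "c = (x1, y2)" | "c = (x2, y1)" by blast
      then show "\<exists>w\<in>?W \<times> ?Z. d w c > m"
      proof cases
        case 1 then show ?thesis using gt com[of "(x2,y2)" "(x1,y1)"] x unfolding m_def
          by (intro bexI[of _ "(x2,y2)"]) auto
      next
        case 2 then show ?thesis using gt x unfolding m_def
          by (intro bexI[of _ "(x1,y1)"]) auto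
      next
        case 3 then show ?thesis using gt sw x unfolding m_def
          by (intro bexI[of _ "(x2,y1)"]) auto
      next
        case 4 then show ?thesis using gt sw com[of "(x1,y2)" "(x2,y1)"] x unfolding m_def
          by (intro bexI[of _ "(x1,y2)"]) auto
      qed
    qed
    have "covering_number (X \<times> Y) d m (?W \<times> ?Z) \<noteq> 1"
      by (rule cov_ne1[OF assms(5)]) (use x m far in auto)
    moreover have "covering_number (X \<times> Y) d m (?W \<times> ?Z) =
        covering_number X dX m ?W * covering_number Y dY m ?Z"
      using H cW cZ m by blast
    then have "covering_number (X \<times> Y) d m (?W \<times> ?Z) = 1"
      unfolding c1 c2 by simp
    ultimately show False by simp
  qed
  show "ultrametric (X \<times> Y) d" unfolding ultrametric_def
  proof (clarify)
    fix a1 a2 b1 b2 c1 c2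
    assume h: "a1 \<in> X" "a2 \<in> Y" "b1 \<in> X" "b2 \<in> Y" "c1 \<in> X" "c2 \<in> Y"
    have hx: "dX a1 b1 \<le> max (dX a1 c1) (dX c1 b1)" using assms(2) h unfolding ultrametric_def by blast
    have hy: "dY a2 b2 \<le> max (dY a2 c2) (dY c2 b2)" using assms(4) h unfolding ultrametric_def by blast
    show "d (a1, a2) (b1, b2) \<le> max (d (a1, a2) (c1, c2)) (d (c1, c2) (b1, b2))"
    proof -
      have "max (dX a1 b1) (dY a2 b2) \<le> max (max (dX a1 c1) (dY a2 c2)) (max (dX c1 b1) (dY c2 b2))"
        using hx hy by (simp add: le_max_iff_disj) linarith
      moreover have "d (a1, a2) (b1, b2) = max (dX a1 b1) (dY a2 b2)" using dinf h by blast
      moreover have "d (a1, a2) (c1, c2) = max (dX a1 c1) (dY a2 c2)" using dinf h by blast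
      moreover have "d (c1, c2) (b1, b2) = max (dX c1 b1) (dY c2 b2)" using dinf h by blast
      ultimately show ?thesis by simp
    qed
  qed
qed

end
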